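(* Let $\{a_i\}_{1\le i\le p}$ be a finite real sequence, and let $S_1=\{1,\dots,k_1\}$, $S_2=\{k_1,\dots,k_2\}$, $S_3=\{k_2,\dots,k_3\}$ be three neighboring maximal segments, where $S_1$ and $S_3$ are maximal non-decreasing segments and $S_2$ is a maximal decreasing segment. For each fixed $j\in S_3$, the function $i\mapsto\mathrm{aver}(i,j)$ satisfies: (1) $\mathrm{aver}(i,j)<\mathrm{aver}(i-1,j)$ for each $i^*(j)<i\le k_1$; (2) $\mathrm{aver}(i,j)\ge a_{i-1}$ for all $2\le i\le i^*(j)$; (3) $\mathrm{aver}(i,j)\ge\mathrm{aver}(i-1,j)$ for each $2\le i\le i^*(j)$.
   Context: For a finite sequence $\{a_i\}_{1\le i\le p}$, $\{k_1,k_1+1,\dots,k_2\}$ is a maximal decreasing segment (MDS) if $a_{k_1}>a_{k_1+1}>\cdots>a_{k_2}$, and ($a_{k_1-1}\le a_{k_1}$ or $k_1=1$), and ($a_{k_2}\ge a_{k_2+1}$ or $k_2=p$); it is a maximal non-decreasing segment (MNDS) if $a_{k_1}\le a_{k_1+1}\le\cdots\le a_{k_2}$, and ($a_{k_1-1}>a_{k_1}$ or $k_1=1$), and ($a_{k_2}<a_{k_2+1}$ or $k_2=p$). Set $\mathrm{aver}(i,j)=\frac{1}{j-i+1}\sum_{l=i}^j a_l$. For $j\in S_3$, let $\mathcal{I}_j=\{i:\ 2\le i\le k_1,\ a_{i-1}>\mathrm{aver}(i,j)\}$ and define the left balance point $i^*(j)=\min_{i\in\mathcal{I}_j}i-1$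 if $\mathcal{I}_j\ne\emptyset$, and $i^*(j)=k_1$ if $\mathcal{I}_j=\emptyset$. *)

theory Defs
  imports Complex_Main
begin

text \<open>A finite real sequence a_1,...,a_p is modelled by a :: nat => real; only indices 1..p matter.\<close>

definition MDS :: "(nat \<Rightarrow> real) \<Rightarrow> nat \<Rightarrow> nat \<Rightarrow> nat \<Rightarrow> bool" where
  "MDS a p k1 k2 \<longleftrightarrow> 1 \<le> k1 \<and> k1 \<le> k2 \<and> k2 \<le> p
     \<and> (\<forall>l. k1 \<le> l \<and> l < k2 \<longrightarrow> a l > a (l + 1))
     \<and> (k1 = 1 \<or> a (k1 - 1) \<le> a k1)
     \<and> (k2 = p \<or> a k2 \<le> a (k2 + 1))"

definition MNDS :: "(nat \<Rightarrow> real) \<Rightarrow> nat \<Rightarrow> nat \<Rightarrow> nat \<Rightarrow> bool" where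
  "MNDS a p k1 k2 \<longleftrightarrow> 1 \<le> k1 \<and> k1 \<le> k2 \<and> k2 \<le> p
     \<and> (\<forall>l. k1 \<le> l \<and> l < k2 \<longrightarrow> a l \<le> a (l + 1))
     \<and> (k1 = 1 \<or> a (k1 - 1) > a k1)
     \<and> (k2 = p \<or> a k2 > a (k2 + 1))"

definition aver :: "(nat \<Rightarrow> real) \<Rightarrow> nat \<Rightarrow> nat \<Rightarrow> real" where
  "aver a i j = (\<Sum>l = i..j. a l) / (real j - real i + 1)"

definition balI :: "(nat \<Rightarrow> real) \<Rightarrow> nat \<Rightarrow> nat \<Rightarrow> nat set" where
  "balI a k1 j = {i. 2 \<le> i \<and> i \<le> k1 \<and> a (i - 1) > aver a i j}"

definition istar :: "(nat \<Rightarrow> real) \<Rightarrow> nat \<Rightarrow> nat \<Rightarrow> nat" where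
  "istar a k1 j = (if balI a k1 j = {} then k1 else Min (balI a k1 j) - 1)"

end

theory Submission
  imports Defs
begin

lemma avgrel:
  assumes "i < j"
  shows "(real j - real i + 1) * aver a i j = a i + (real j - real i) * aver a (Suc i) j"
proof -
  have s: "(\<Sum>l = i..j. a l) = a i + (\<Sum>l = Suc i..j. a l)"
    using assms by (simp add: sum.atLeast_Suc_atMost)
  have d1: "real j - real i + 1 \<noteq> 0" using assms by simp
  have d2: "real j - real (Suc i) + 1 = real j - real i" by simp
  have d3: "real j - real i \<noteq> 0" using assms by simp
  show ?thesis unfolding aver_def s d2 using d1 d3 by (simp add: field_simps)
qed

lemma cmp1:
  assumes "i < j" "a i > aver a i j"
  shows "aver a (Suc i) j < aver a i j"
proof -
  have r: "(real j - real i + 1) * aver a i j = a i + (real j - real i) * aver a (Suc i) j"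
    using avgrel[OF assms(1)] .
  have n: "real j - real i > 0" using assms by simp
  have "(real j - real i) * aver a (Suc i) j < (real j - real i) * aver a i j"
    using r assms(2) by (simp add: algebra_simps)
  then show ?thesis using n by simp
qed

lemma cmp2:
  assumes "i < j" "a i \<le> aver a i j"
  shows "aver a i j \<le> aver a (Suc i) j"
proof -
  have r: "(real j - real i + 1) * aver a i j = a i + (real j - real i) * aver a (Suc i) j"
    using avgrel[OF assms(1)] .
  have n: "real j - real i > 0" using assms by simp
  have "(real j - real i) * aver a i j \<le> (real j - real i) * aver a (Suc i) j"
    using r assms(2) by (simp add: algebra_simps)
  then show ?thesis using n by simp
qed

lemma cmp1b:
  assumes "i < j" "a i > aver a (Suc i) j"
  shows "aver a (Suc i) j < aver a i j"
proof -
  have r: "(real j - real i + 1) * aver a i j = a i + (real j - real i) * aver a (Suc i) j"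
    using avgrel[OF assms(1)] .
  have "(real j - real i + 1) * aver a (Suc i) j < (real j - real i + 1) * aver a i j"
    using r assms(2) by (simp add: algebra_simps)
  then show ?thesis using assms(1) by (simp add: mult_less_cancel_left)
qed

lemma cmp2b:
  assumes "i < j" "a i \<le> aver a (Suc i) j"
  shows "aver a i j \<le> aver a (Suc i) j"
proof -
  have r: "(real j - real i + 1) * aver a i j = a i + (real j - real i) * aver a (Suc i) j"
    using avgrel[OF assms(1)] .
  have "(real j - real i + 1) * aver a i j \<le> (real j - real i + 1) * aver a (Suc i) j"
    using r assms(2) by (simp add: algebra_simps)
  then show ?thesis using assms(1) by (simp add: mult_le_cancel_left)
qed

theorem lemma2:
  fixes a :: "nat \<Rightarrow> real" and p k1 k2 k3 j :: nat
  assumes S1: "MNDS a p 1 k1"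
    and S2: "MDS a p k1 k2"
    and S3: "MNDS a p k2 k3"
    and hj: "j \<in> {k2..k3}"
  shows "(\<forall>i. istar a k1 j < i \<and> i \<le> k1 \<longrightarrow> aver a i j < aver a (i - 1) j)
       \<and> (\<forall>i. 2 \<le> i \<and> i \<le> istar a k1 j \<longrightarrow> aver a i j \<ge> a (i - 1))
       \<and> (\<forall>i. 2 \<le> i \<and> i \<le> istar a k1 j \<longrightarrow> aver a i j \<ge> aver a (i - 1) j)"
proof -
  have mono: "\<And>l. 1 \<le> l \<Longrightarrow> l < k1 \<Longrightarrow> a l \<le> a (l + 1)"
    using S1 unfolding MNDS_def by blast
  have jk: "k1 \<le> j" using S2 hj unfolding MDS_def by auto
  have fin: "finite (balI a k1 j)" unfolding balI_def by auto
  have ik: "istar a k1 j \<le> k1"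
  proof (cases "balI a k1 j = {}")
    case True then show ?thesis unfolding istar_def by simp
  next
    case False
    then have "Min (balI a k1 j) \<in> balI a k1 j" using fin by simp
    then show ?thesis using False unfolding istar_def balI_def by auto
  qed
  have P2: "\<forall>i. 2 \<le> i \<and> i \<le> istar a k1 j \<longrightarrow> aver a i j \<ge> a (i - 1)"
  proof (intro allI impI)
    fix i assume i: "2 \<le> i \<and> i \<le> istar a k1 j"
    show "aver a i j \<ge> a (i - 1)"
    proof (cases "balI a k1 j = {}")
      case True
      then have "i \<le> k1" using i unfolding istar_def by simp
      then show ?thesis using True i unfolding balI_def by auto
    next
      case False
      then have "i < Min (balI a k1 j)" using i unfolding istar_def by auto
      then have "i \<notin> balI a k1 j" using fin by (meson Min_le not_le)
      moreover have "Min (balI a k1 j) \<in> balI a k1 j" using fin False by simp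
      ultimately show ?thesis using i \<open>i < Min (balI a k1 j)\<close> unfolding balI_def by auto
    qed
  qed
  have P3: "\<forall>i. 2 \<le> i \<and> i \<le> istar a k1 j \<longrightarrow> aver a i j \<ge> aver a (i - 1) j"
  proof (intro allI impI)
    fix i assume i: "2 \<le> i \<and> i \<le> istar a k1 j"
    have "i - 1 < j" using i ik jk by linarith
    moreover have "a (i - 1) \<le> aver a i j" using P2 i by blast
    ultimately have "aver a (i - 1) j \<le> aver a (Suc (i - 1)) j"
      using cmp2b[of "i - 1" j a] i by simp
    then show "aver a i j \<ge> aver a (i - 1) j" using i by simp
  qed
  have P1: "\<forall>i. istar a k1 j < i \<and> i \<le> k1 \<longrightarrow> aver a i j < aver a (i - 1) j"
  proof (cases "balI a k1 j = {}")
    case True then show ?thesis unfolding istar_def by simp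
  next
    case False
    define m where "m = Min (balI a k1 j)"
    have mI: "m \<in> balI a k1 j" using fin False unfolding m_def by simp
    have ist: "istar a k1 j = m - 1" using False unfolding istar_def m_def by simp
    have m2: "2 \<le> m" and mk: "m \<le> k1" and am: "a (m - 1) > aver a m j"
      using mI unfolding balI_def by auto
    have Q: "m + d \<le> k1 \<Longrightarrow> a (m + d - 1) > aver a (m + d) j" for d
    proof (induction d)
      case 0 then show ?case using am by simp
    next
      case (Suc d)
      let ?i = "m + d"
      have ih: "a (?i - 1) > aver a ?i j" using Suc by simp
      have "a (?i - 1) \<le> a (?i - 1 + 1)" using mono[of "?i - 1"] m2 Suc.prems by simp
      then have ai: "a ?i > aver a ?i j" using ih m2 by simp
      have lt: "?i < j" using Suc.prems jk by simp
      have "aver a (Suc ?i) j < aver a ?i j" using cmp1[OF lt ai] .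
      then show ?case using ai by simp
    qed
    show ?thesis
    proof (intro allI impI)
      fix i assume i: "istar a k1 j < i \<and> i \<le> k1"
      then have mi: "m \<le> i" using ist m2 by linarith
      have "a (i - 1) > aver a i j" using Q[of "i - m"] mi i by simp
      moreover have "i - 1 < j" using i jk mi m2 by linarith
      ultimately have "aver a (Suc (i - 1)) j < aver a (i - 1) j"
        using cmp1b[of "i - 1" j a] mi m2 by simp
      then show "aver a i j < aver a (i - 1) j" using mi m2 by simp
    qed
  qed
  show ?thesis using P1 P2 P3 by blast
qed
end
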